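(* Let $R$ be a subring of $\bar{\mathbb{Q}}$ and let $S\subset\mathbb{N}$ be an infinite subset. Then there is no ideal $I$ of $R[q]$ such that the identity of $R[q]$ induces an isomorphism $R[q]^S\cong\varprojlim_j R[q]/I^j$.
   Context: $q$ is an indeterminate. For $n\in\mathbb{N}$, $\Phi_n(q)$ is the $n$th cyclotomic polynomial; for $S\subset\mathbb{N}$, $\Phi_S^*$ is the multiplicative subset of $\mathbb{Z}[q]$ generated by $\{\Phi_m(q):m\in S\}$, directed by divisibility, and $R[q]^S=\varprojlim_{f\in\Phi_S^*}R[q]/(f)$. *)

theory Defs
  imports "HOL-Computational_Algebra.Computational_Algebra" Complex_Main
begin

definition cyclotomic_poly :: "nat \<Rightarrow> complex poly" where
  "cyclotomic_poly n =
     (\<Prod>k\<in>{k. 1 \<le> k \<and> k \<le> n \<and> coprime k n}. [:- cis (2 * pi * real k / real n), 1:])"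

definition subring_of_alg :: "complex set \<Rightarrow> bool" where
  "subring_of_alg R \<longleftrightarrow> R \<subseteq> {x. algebraic x} \<and> 0 \<in> R \<and> 1 \<in> R \<and>
     (\<forall>a\<in>R. \<forall>b\<in>R. a + b \<in> R \<and> a * b \<in> R \<and> - a \<in> R)"

definition Rpoly :: "complex set \<Rightarrow> complex poly set" where
  "Rpoly R = {p. \<forall>i. coeff p i \<in> R}"

definition is_ideal :: "complex set \<Rightarrow> complex poly set \<Rightarrow> bool" where
  "is_ideal R I \<longleftrightarrow> I \<subseteq> Rpoly R \<and> 0 \<in> I \<and>
     (\<forall>a\<in>I. \<forall>b\<in>I. a + b \<in> I) \<and> (\<forall>a\<in>I. \<forall>r\<in>Rpoly R. r * a \<in> I)"

definition ideal_gen :: "complex set \<Rightarrow> complex poly set \<Rightarrow> complex poly set" where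
  "ideal_gen R X = \<Inter>{J. is_ideal R J \<and> X \<subseteq> J}"

primrec ideal_pow :: "complex set \<Rightarrow> complex poly set \<Rightarrow> nat \<Rightarrow> complex poly set" where
  "ideal_pow R I 0 = Rpoly R"
| "ideal_pow R I (Suc j) = ideal_gen R {a * b | a b. a \<in> ideal_pow R I j \<and> b \<in> I}"

definition pideal :: "complex set \<Rightarrow> complex poly \<Rightarrow> complex poly set" where
  "pideal R f = {f * g | g. g \<in> Rpoly R}"

definition Phi_star :: "nat set \<Rightarrow> complex poly set" where
  "Phi_star S = {prod_mset (image_mset cyclotomic_poly M) | M. set_mset M \<subseteq> S}"

text \<open>Elements (representatives) of R[q]^S = lim_{f \<in> \<Phi>_S^*} R[q]/(f), directed by divisibility.\<close>
definition compat_S :: "complex set \<Rightarrow> nat set \<Rightarrow> (complex poly \<Rightarrow> complex poly) \<Rightarrow> bool" where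
  "compat_S R S x \<longleftrightarrow> (\<forall>f\<in>Phi_star S. x f \<in> Rpoly R) \<and>
     (\<forall>f\<in>Phi_star S. \<forall>g\<in>Phi_star S. f dvd g \<longrightarrow> x g - x f \<in> pideal R f)"

text \<open>Elements (representatives) of lim_j R[q]/I^j.\<close>
definition compat_I :: "complex set \<Rightarrow> complex poly set \<Rightarrow> (nat \<Rightarrow> complex poly) \<Rightarrow> bool" where
  "compat_I R I y \<longleftrightarrow> (\<forall>j. y j \<in> Rpoly R) \<and>
     (\<forall>j k. j \<le> k \<longrightarrow> y k - y j \<in> ideal_pow R I j)"

text \<open>y (in the I-adic limit) is sent to x (in R[q]^S) by the map induced by the identity of R[q].\<close>
definition induced :: "complex set \<Rightarrow> nat set \<Rightarrow> complex poly set \<Rightarrow>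
    (nat \<Rightarrow> complex poly) \<Rightarrow> (complex poly \<Rightarrow> complex poly) \<Rightarrow> bool" where
  "induced R S I y x \<longleftrightarrow>
     (\<forall>f\<in>Phi_star S. \<forall>j. ideal_pow R I j \<subseteq> pideal R f \<longrightarrow> y j - x f \<in> pideal R f)"

text \<open>The identity of R[q] induces a map lim_j R[q]/I^j \<rightarrow> R[q]^S (i.e. it is continuous:
  every (f) contains some I^j), and this map is bijective (on equivalence classes).\<close>
definition identity_induces_iso :: "complex set \<Rightarrow> nat set \<Rightarrow> complex poly set \<Rightarrow> bool" where
  "identity_induces_iso R S I \<longleftrightarrow>
     (\<forall>f\<in>Phi_star S. \<exists>j. ideal_pow R I j \<subseteq> pideal R f) \<and>
     (\<forall>y y' x. compat_I R I y \<and> compat_I R I y' \<and> compat_S R S x \<and>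
         induced R S I y x \<and> induced R S I y' x \<longrightarrow> (\<forall>j. y j - y' j \<in> ideal_pow R I j)) \<and>
     (\<forall>x. compat_S R S x \<longrightarrow> (\<exists>y. compat_I R I y \<and> induced R S I y x))"

end

theory Submission
  imports Defs
begin

definition zpoly :: "complex poly \<Rightarrow> bool" where
  "zpoly p \<longleftrightarrow> (\<forall>i. coeff p i \<in> \<int>)"

lemma zpoly_1[simp]: "zpoly 1" and zpoly_0[simp]: "zpoly 0"
  by (auto simp: zpoly_def coeff_1)

lemma zpoly_monom: "c \<in> \<int> \<Longrightarrow> zpoly (monom c n)"
  by (auto simp: zpoly_def coeff_monom)

lemma zpoly_add: "zpoly p \<Longrightarrow> zpoly q \<Longrightarrow> zpoly (p + q)"
  by (auto simp: zpoly_def)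

lemma zpoly_diff: "zpoly p \<Longrightarrow> zpoly q \<Longrightarrow> zpoly (p - q)"
  by (auto simp: zpoly_def)

lemma zpoly_mult: "zpoly p \<Longrightarrow> zpoly q \<Longrightarrow> zpoly (p * q)"
  unfolding zpoly_def coeff_mult by (auto intro!: Ints_sum Ints_mult)

lemma zpoly_prod: "(\<And>x. x \<in> A \<Longrightarrow> zpoly (f x)) \<Longrightarrow> zpoly (prod f A)"
  by (induction A rule: infinite_finite_induct) (auto intro: zpoly_mult)

lemma zpoly_prod_mset: "(\<And>x. x \<in># M \<Longrightarrow> zpoly (f x)) \<Longrightarrow> zpoly (prod_mset (image_mset f M))"
  by (induction M) (auto intro: zpoly_mult)

lemma zpoly_sum: "(\<And>x. x \<in> A \<Longrightarrow> zpoly (f x)) \<Longrightarrow> zpoly (sum f A)"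
  by (induction A rule: infinite_finite_induct) (auto intro: zpoly_add)

lemma zpoly_div:
  assumes f: "zpoly f" "lead_coeff f = 1"
  shows "zpoly (f * h) \<Longrightarrow> zpoly h"
proof (induction "degree h" arbitrary: h rule: less_induct)
  case less
  have f0: "f \<noteq> 0" using f by auto
  have c: "lead_coeff h \<in> \<int>"
  proof -
    have "coeff (f * h) (degree f + degree h) = lead_coeff h"
      using coeff_mult_degree_sum[of f h] f by simp
    thus ?thesis using less.prems by (metis zpoly_def)
  qed
  show ?case
  proof (cases "degree h = 0")
    case True
    show ?thesis unfolding zpoly_def
    proof
      fix i show "coeff h i \<in> \<int>" using c True by (cases "i = 0") (auto simp: coeff_eq_0)
    qed
  next
    case False
    define h' where "h' = h - monom (lead_coeff h) (degree h)"
    have "degree h' < degree h"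
    proof (cases "h' = 0")
      case True then show ?thesis using False by simp
    next
      case False
      have le: "degree h' \<le> degree h" unfolding h'_def
        by (meson degree_diff_le degree_monom_le order.refl)
      have "coeff h' (degree h) = 0" by (simp add: h'_def)
      hence "degree h' \<noteq> degree h" using False
        by (metis leading_coeff_0_iff)
      with le show ?thesis by simp
    qed
    moreover have "zpoly (f * h')"
      unfolding h'_def right_diff_distrib
      by (intro zpoly_diff less.prems zpoly_mult f zpoly_monom c)
    ultimately have "zpoly h'" using less by blast
    hence "zpoly (h' + monom (lead_coeff h) (degree h))" by (intro zpoly_add zpoly_monom c)
    thus ?thesis by (simp add: h'_def)
  qed
qed

lemma cyclo_monic: "lead_coeff (cyclotomic_poly n) = 1"
  unfolding cyclotomic_poly_def lead_coeff_prod by simp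

lemma cyclo_nz: "cyclotomic_poly n \<noteq> 0"
  using cyclo_monic[of n] by auto

lemma xm1_decomp:
  assumes m: "m > 0"
  shows "monom 1 m - 1 = (\<Prod>k\<in>{1..m}. [:- cis (2 * pi * real k / real m), 1:])"
proof -
  define p :: "complex poly" where "p = monom 1 m - 1"
  have cm: "coeff p m = 1" using m by (simp add: p_def coeff_monom)
  have dp: "degree p = m" unfolding p_def using m
    by (metis cm degree_1 degree_diff_le degree_monom_eq diff_self le_antisym le_zero_eq order.refl one_neq_zero le_degree p_def)
  have lc: "lead_coeff p = 1" using cm dp by simp
  have p0: "p \<noteq> 0" using lc by auto
  have roots: "{z. poly p z = 0} = {z. z ^ m = 1}"
    by (auto simp: p_def poly_monom)
  have rsq: "rsquarefree p"
    unfolding rsquarefree_roots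
  proof (intro allI notI)
    fix a assume a: "poly p a = 0 \<and> poly (pderiv p) a = 0"
    have "pderiv p = monom (of_nat m) (m - 1)"
      by (simp add: p_def pderiv_diff pderiv_monom)
    hence "of_nat m * a ^ (m - 1) = 0" using a by (simp add: poly_monom)
    moreover have "a \<noteq> 0" using a m by (auto simp: p_def poly_monom power_0_left)
    ultimately show False using m by simp
  qed
  have ord: "order z p = 1" if "poly p z = 0" for z
    using rsquarefree_root_order[OF rsq that p0] .
  have "p = smult (lead_coeff p) (\<Prod>z|poly p z = 0. [:-z, 1:] ^ order z p)"
    by (rule complex_poly_decompose[symmetric])
  also have "\<dots> = (\<Prod>z|poly p z = 0. [:-z, 1:])"
    using lc ord by (auto intro!: prod.cong)
  also have "\<dots> = (\<Prod>z\<in>{z. z ^ m = 1}. [:-z, 1:])" by (simp add: roots)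
  also have "\<dots> = (\<Prod>k\<in>{..<m}. [:- cis (2 * pi * real k / real m), 1:])"
    by (subst prod.reindex_bij_betw[OF bij_betw_roots_unity[OF m], symmetric]) simp
  also have "\<dots> = (\<Prod>k\<in>{1..m}. [:- cis (2 * pi * real k / real m), 1:])"
  proof -
    obtain n where n: "m = Suc n" using m by (cases m) auto
    let ?h = "\<lambda>k::nat. [:- cis (2 * pi * real k / real m), 1:]"
    have "?h 0 = ?h m" using m by (simp add: complex_eq_iff)
    have "(\<Prod>k\<in>{1..m}. ?h k) = (\<Prod>k<n. ?h (Suc k)) * ?h m"
      by (simp add: n prod.atLeast1_atMost_eq)
    moreover have "(\<Prod>k<m. ?h k) = ?h 0 * (\<Prod>k<n. ?h (Suc k))"
      unfolding n by (rule prod.lessThan_Suc_shift)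
    ultimately show ?thesis using \<open>?h 0 = ?h m\<close> by (simp add: mult.commute)
  qed
  finally show ?thesis by (simp add: p_def)
qed

lemma cyclo_group:
  assumes m: "m > 0" and g: "g dvd m"
  shows "(\<Prod>k\<in>{k\<in>{1..m}. gcd k m = g}. [:- cis (2 * pi * real k / real m), 1:])
         = cyclotomic_poly (m div g)"
proof -
  define d where "d = m div g"
  have md: "m = g * d" using g by (simp add: d_def)
  have g0: "g > 0" and d0: "d > 0" using m md by auto
  have set_eq: "{k\<in>{1..m}. gcd k m = g} = (\<lambda>k'. g * k') ` {k. 1 \<le> k \<and> k \<le> d \<and> coprime k d}"
  proof (intro equalityI subsetI)
    fix k assume k: "k \<in> {k\<in>{1..m}. gcd k m = g}"
    then have "g dvd k" by (metis (mono_tags, lifting) gcd_dvd1 mem_Collect_eq)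
    then obtain k' where k': "k = g * k'" by blast
    have "g * gcd k' d = g" using k by (simp add: k' md gcd_mult_distrib_nat)
    hence "coprime k' d" using g0 by (simp add: coprime_iff_gcd_eq_1)
    moreover have "1 \<le> k'" "k' \<le> d" using k k' md g0 by auto
    ultimately show "k \<in> (\<lambda>k'. g * k') ` {k. 1 \<le> k \<and> k \<le> d \<and> coprime k d}"
      using k' by blast
  next
    fix k assume "k \<in> (\<lambda>k'. g * k') ` {k. 1 \<le> k \<and> k \<le> d \<and> coprime k d}"
    then obtain k' where k': "k = g * k'" "1 \<le> k'" "k' \<le> d" "coprime k' d" by blast
    have "gcd k m = g * gcd k' d" unfolding k'(1) md by (rule gcd_mult_distrib_nat[symmetric])
    also have "\<dots> = g" using k'(4) by (metis coprime_iff_gcd_eq_1 mult.right_neutral)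
    finally show "k \<in> {k\<in>{1..m}. gcd k m = g}" using k' g0 md by auto
  qed
  have inj: "inj_on (\<lambda>k'. g * k') {k. 1 \<le> k \<and> k \<le> d \<and> coprime k d}"
    using g0 by (auto simp: inj_on_def)
  have "(\<Prod>k\<in>{k\<in>{1..m}. gcd k m = g}. [:- cis (2 * pi * real k / real m), 1:])
      = (\<Prod>k\<in>{k. 1 \<le> k \<and> k \<le> d \<and> coprime k d}. [:- cis (2 * pi * real (g * k) / real m), 1:])"
    unfolding set_eq by (subst prod.reindex[OF inj]) simp
  also have "\<dots> = (\<Prod>k\<in>{k. 1 \<le> k \<and> k \<le> d \<and> coprime k d}. [:- cis (2 * pi * real k / real d), 1:])"
  proof (intro prod.cong refl)
    fix k
    have "2 * pi * real (g * k) / real m = 2 * pi * real k / real d"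
      using g0 d0 by (simp add: md field_simps)
    thus "[:- cis (2 * pi * real (g * k) / real m), 1:] = [:- cis (2 * pi * real k / real d), 1:]"
      by simp
  qed
  finally show ?thesis by (simp add: cyclotomic_poly_def d_def)
qed

lemma cyclo_zpoly: "zpoly (cyclotomic_poly m)"
proof (induction m rule: less_induct)
  case (less m)
  show ?case
  proof (cases "m = 0")
    case True
    have "{k::nat. 1 \<le> k \<and> k \<le> 0 \<and> coprime k 0} = {}" by auto
    then have "cyclotomic_poly 0 = 1" unfolding cyclotomic_poly_def by (subst \<open>_ = {}\<close>) simp
    then show ?thesis using True by simp
  next
    case False
    hence m: "m > 0" by simp
    define D where "D = {g. g dvd m}"
    have fD: "finite D" unfolding D_def by (rule finite_divisors_nat[OF m])
    have 1: "1 \<in> D" by (simp add: D_def)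
    let ?L = "\<lambda>k. [:- cis (2 * pi * real k / real m), 1:]"
    have "monom 1 m - 1 = (\<Prod>k\<in>{1..m}. ?L k)" by (rule xm1_decomp[OF m])
    also have "\<dots> = (\<Prod>g\<in>D. \<Prod>k\<in>{k. k \<in> {1..m} \<and> gcd k m = g}. ?L k)"
      by (rule prod.group[symmetric, OF _ fD]) (auto simp: D_def)
    also have "\<dots> = (\<Prod>g\<in>D. cyclotomic_poly (m div g))"
      by (intro prod.cong refl cyclo_group[OF m]) (auto simp: D_def)
    also have "\<dots> = cyclotomic_poly m * (\<Prod>g\<in>D - {1}. cyclotomic_poly (m div g))"
      using prod.remove[OF fD 1, of "\<lambda>g. cyclotomic_poly (m div g)"] by simp
    finally have eq: "monom 1 m - 1 = (\<Prod>g\<in>D - {1}. cyclotomic_poly (m div g)) * cyclotomic_poly m"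
      by (simp add: mult.commute)
    have zq: "zpoly (\<Prod>g\<in>D - {1}. cyclotomic_poly (m div g))"
    proof (rule zpoly_prod)
      fix g assume "g \<in> D - {1}"
      hence "g dvd m" "g \<noteq> 1" by (auto simp: D_def)
      hence "g > 1" using m by (metis dvd_0_left_iff gr_zeroI less_one nat_neq_iff)
      hence "m div g < m" using m by simp
      thus "zpoly (cyclotomic_poly (m div g))" by (rule less.IH)
    qed
    have lq: "lead_coeff (\<Prod>g\<in>D - {1}. cyclotomic_poly (m div g)) = 1"
      by (simp add: lead_coeff_prod cyclo_monic)
    have "zpoly (monom 1 m - 1)" by (intro zpoly_diff zpoly_monom zpoly_1) simp
    with eq have "zpoly ((\<Prod>g\<in>D - {1}. cyclotomic_poly (m div g)) * cyclotomic_poly m)" by simp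
    from zpoly_div[OF zq lq this] show ?thesis .
  qed
qed

lemma cyclo_0: "cyclotomic_poly 0 = 1"
proof -
  have "{k::nat. 1 \<le> k \<and> k \<le> 0 \<and> coprime k 0} = {}" by auto
  thus ?thesis unfolding cyclotomic_poly_def by (subst \<open>_ = {}\<close>) simp
qed

lemma cyclo_root_dvd: "m \<ge> 1 \<Longrightarrow> [:- cis (2 * pi / real m), 1:] dvd cyclotomic_poly m"
  unfolding cyclotomic_poly_def
  using dvd_prodI[of "{k. 1 \<le> k \<and> k \<le> m \<and> coprime k m}" 1
      "\<lambda>k. [:- cis (2 * pi * real k / real m), 1:]"] by simp

lemma cyclo_root: "m \<ge> 1 \<Longrightarrow> poly (cyclotomic_poly m) (cis (2 * pi / real m)) = 0"
  using cyclo_root_dvd poly_eq_0_iff_dvd by blast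

lemma cyclo_deg: "m \<ge> 1 \<Longrightarrow> degree (cyclotomic_poly m) \<ge> 1"
  using dvd_imp_degree_le[OF cyclo_root_dvd cyclo_nz] by simp

lemma zeta_inj: "inj_on (\<lambda>m::nat. cis (2 * pi / real m)) {m. m \<ge> 2}"
proof (rule inj_onI)
  fix m n :: nat assume m: "m \<in> {m. m \<ge> 2}" and n: "n \<in> {m. m \<ge> 2}"
    and eq: "cis (2 * pi / real m) = cis (2 * pi / real n)"
  hence "cos (2 * pi / real m) = cos (2 * pi / real n)" by (metis cis.sel(1))
  moreover have "0 \<le> 2 * pi / real m" "2 * pi / real m \<le> pi"
    using m by (auto simp: field_simps)
  moreover have "0 \<le> 2 * pi / real n" "2 * pi / real n \<le> pi"
    using n by (auto simp: field_simps)
  ultimately have "2 * pi / real m = 2 * pi / real n" using cos_inj_pi by blast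
  thus "m = n" using m n by (auto simp: field_simps)
qed

lemma subring_Ints:
  assumes R: "subring_of_alg R" and c: "c \<in> \<int>" shows "c \<in> R"
proof -
  have nat: "of_nat n \<in> R" for n
    by (induction n) (use R in \<open>auto simp: subring_of_alg_def\<close>)
  obtain k where k: "c = of_int k" using c by (auto elim: Ints_cases)
  show ?thesis
  proof (cases "k \<ge> 0")
    case True then show ?thesis using nat[of "nat k"] k by simp
  next
    case False
    then have "c = - of_nat (nat (-k))" using k by simp
    then show ?thesis using nat[of "nat (-k)"] R by (auto simp: subring_of_alg_def)
  qed
qed

lemma zpoly_Rpoly: "subring_of_alg R \<Longrightarrow> zpoly p \<Longrightarrow> p \<in> Rpoly R"
  by (auto simp: Rpoly_def zpoly_def intro: subring_Ints)

lemma Phi_star_props: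
  assumes "f \<in> Phi_star S" shows "zpoly f" "lead_coeff f = 1"
proof -
  obtain M where f: "f = prod_mset (image_mset cyclotomic_poly M)" using assms
    by (auto simp: Phi_star_def)
  show "zpoly f" unfolding f by (rule zpoly_prod_mset) (rule cyclo_zpoly)
  have "lead_coeff (prod_mset (image_mset cyclotomic_poly M)) = 1"
    by (induction M) (auto simp: lead_coeff_mult cyclo_monic)
  thus "lead_coeff f = 1" using f by simp
qed

lemma Rpoly_1: "subring_of_alg R \<Longrightarrow> 1 \<in> Rpoly R"
  by (auto simp: Rpoly_def coeff_1 subring_of_alg_def)

lemma Rpoly_0: "subring_of_alg R \<Longrightarrow> 0 \<in> Rpoly R"
  by (auto simp: Rpoly_def subring_of_alg_def)

lemma ideal_gen_sup: "X \<subseteq> ideal_gen R X"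
  by (auto simp: ideal_gen_def)

lemma pow_in_ideal_pow:
  assumes "subring_of_alg R" "p \<in> I"
  shows "p ^ j \<in> ideal_pow R I j"
proof (induction j)
  case 0 then show ?case using Rpoly_1[OF assms(1)] by simp
next
  case (Suc j)
  have "p ^ Suc j \<in> {a * b | a b. a \<in> ideal_pow R I j \<and> b \<in> I}"
  proof -
    have "p ^ Suc j = p ^ j * p" by (rule power_Suc2)
    thus ?thesis using Suc assms(2) by blast
  qed
  then show ?case using ideal_gen_sup[of "{a * b | a b. a \<in> ideal_pow R I j \<and> b \<in> I}" R]
    by (simp only: ideal_pow.simps) blast
qed

lemma zero_ideal_pow1:
  assumes "subring_of_alg R" shows "ideal_pow R {0} 1 \<subseteq> {0}"
proof -
  have "is_ideal R {0}" using Rpoly_0[OF assms] by (auto simp: is_ideal_def)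
  moreover have "{a * b | a b. a \<in> ideal_pow R {0} 0 \<and> b \<in> {0}} \<subseteq> {0}" by auto
  ultimately show ?thesis by (auto simp: ideal_gen_def)
qed

fun FF :: "(nat \<Rightarrow> nat) \<Rightarrow> nat \<Rightarrow> complex poly" where
  "FF e 0 = 1"
| "FF e (Suc n) = FF e n * (\<Prod>i\<le>n. cyclotomic_poly (e i))"

definition SS :: "(nat \<Rightarrow> nat) \<Rightarrow> nat \<Rightarrow> complex poly" where
  "SS e N = (\<Sum>n<N. FF e n)"

lemma FF_nz: "FF e n \<noteq> 0"
  by (induction n) (auto simp: cyclo_nz)

lemma FF_zpoly: "zpoly (FF e n)"
  by (induction n) (auto intro!: zpoly_mult zpoly_prod cyclo_zpoly)

lemma SS_zpoly: "zpoly (SS e n)"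
  unfolding SS_def by (intro zpoly_sum FF_zpoly)

lemma FF_deg_step:
  assumes "\<And>i. e i \<ge> 1"
  shows "degree (FF e n) < degree (FF e (Suc n))"
proof -
  have G0: "(\<Prod>i\<le>n. cyclotomic_poly (e i)) \<noteq> 0" by (simp add: cyclo_nz)
  have "cyclotomic_poly (e n) dvd (\<Prod>i\<le>n. cyclotomic_poly (e i))"
    by (rule dvd_prodI) auto
  hence "degree (cyclotomic_poly (e n)) \<le> degree (\<Prod>i\<le>n. cyclotomic_poly (e i))"
    using dvd_imp_degree_le G0 by blast
  moreover have "degree (cyclotomic_poly (e n)) \<ge> 1" using cyclo_deg assms by blast
  ultimately show ?thesis using FF_nz[of e n] G0 by (simp add: degree_mult_eq)
qed

lemma FF_deg_ge:
  assumes "\<And>i. e i \<ge> 1" shows "degree (FF e n) \<ge> n"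
proof (induction n)
  case (Suc n) then show ?case using FF_deg_step[of e n, OF assms] by simp
qed simp

lemma FF_deg_mono:
  assumes "\<And>i. e i \<ge> 1" "n < N" shows "degree (FF e n) < degree (FF e N)"
  using lift_Suc_mono_less[of "\<lambda>n. degree (FF e n)", OF FF_deg_step[OF assms(1)] assms(2)] .

lemma FF_dvd: "N \<le> n \<Longrightarrow> FF e N dvd FF e n"
proof (induction n rule: dec_induct)
  case (step n) then show ?case by (simp add: dvd_mult2)
qed simp

lemma SS_deg:
  assumes that: "\<And>i. e i \<ge> 1" shows "degree (SS e k) \<le> degree (FF e k)"
proof (induction k)
  case 0 then show ?case by (simp add: SS_def)
next
  case (Suc k)
  have "degree (SS e (Suc k)) \<le> max (degree (SS e k)) (degree (FF e k))"
    unfolding SS_def by (simp add: degree_add_le)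
  also have "\<dots> \<le> degree (FF e (Suc k))" using Suc FF_deg_step[of e k, OF that] by simp
  finally show ?case .
qed

lemma SS_deg_less:
  assumes that: "\<And>i. e i \<ge> 1" shows "degree (SS e (Suc k)) < degree (FF e (Suc k))"
proof -
  have "degree (SS e (Suc k)) \<le> max (degree (SS e k)) (degree (FF e k))"
    unfolding SS_def by (simp add: degree_add_le)
  also have "\<dots> \<le> degree (FF e k)" using SS_deg[of e k, OF that] by simp
  also have "\<dots> < degree (FF e (Suc k))" using FF_deg_step[of e k, OF that] by simp
  finally show ?thesis .
qed

lemma SS_diff_dvd: "a \<le> b \<Longrightarrow> FF e a dvd (SS e b - SS e a)"
proof (induction b rule: dec_induct)
  case (step n)
  have eq: "SS e (Suc n) - SS e a = (SS e n - SS e a) + FF e n" by (simp add: SS_def)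
  have "FF e a dvd FF e n" using FF_dvd step(1) by blast
  then show ?case unfolding eq using step(3) by (rule dvd_add[rotated])
qed simp

lemma FF_Phi_star:
  assumes "range e \<subseteq> S" shows "FF e n \<in> Phi_star S"
proof (induction n)
  case 0
  show ?case unfolding Phi_star_def by (rule CollectI, rule exI[of _ "{#}"]) simp
next
  case (Suc n)
  then obtain M where M: "FF e n = prod_mset (image_mset cyclotomic_poly M)" "set_mset M \<subseteq> S"
    by (auto simp: Phi_star_def)
  have "(\<Prod>i\<le>n. cyclotomic_poly (e i)) = prod_mset (image_mset cyclotomic_poly (image_mset e (mset_set {..n})))"
    by (simp add: prod_unfold_prod_mset multiset.map_comp o_def)
  hence "FF e (Suc n) = prod_mset (image_mset cyclotomic_poly (M + image_mset e (mset_set {..n})))"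
    using M by simp
  moreover have "set_mset (M + image_mset e (mset_set {..n})) \<subseteq> S" using M assms by auto
  ultimately show ?case unfolding Phi_star_def by blast
qed

lemma Phi_star_dvd_FF:
  assumes "S - {0} \<subseteq> range e"
  shows "set_mset M \<subseteq> S \<Longrightarrow> \<exists>N. prod_mset (image_mset cyclotomic_poly M) dvd FF e N"
proof (induction M)
  case empty then show ?case by auto
next
  case (add m M)
  then obtain N where N: "prod_mset (image_mset cyclotomic_poly M) dvd FF e N" by auto
  show ?case
  proof (cases "m = 0")
    case True then show ?thesis using N by (auto simp: cyclo_0)
  next
    case False
    then obtain i where i: "m = e i" using add.prems assms by auto
    define K where "K = max N i"
    have "FF e N dvd FF e K" by (rule FF_dvd) (simp add: K_def)
    moreover have "cyclotomic_poly (e i) dvd (\<Prod>i\<le>K. cyclotomic_poly (e i))"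
      by (rule dvd_prodI) (auto simp: K_def)
    ultimately have "prod_mset (image_mset cyclotomic_poly M) * cyclotomic_poly m dvd FF e K * (\<Prod>i\<le>K. cyclotomic_poly (e i))"
      using N i by (intro mult_dvd_mono) (auto intro: dvd_trans)
    hence "cyclotomic_poly m * prod_mset (image_mset cyclotomic_poly M) dvd FF e (Suc K)"
      by (simp add: mult.commute)
    then show ?thesis by (intro exI[of _ "Suc K"]) simp
  qed
qed

theorem proposition6p2:
  fixes R :: "complex set" and S :: "nat set"
  assumes "subring_of_alg R" and "infinite S"
  shows "\<not> (\<exists>I. is_ideal R I \<and> identity_induces_iso R S I)"
proof
  note R = assms(1) and Sinf = assms(2)
  assume "\<exists>I. is_ideal R I \<and> identity_induces_iso R S I"
  then obtain I where I: "is_ideal R I" and iso: "identity_induces_iso R S I" by blast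
  from iso have cont: "\<forall>f\<in>Phi_star S. \<exists>j. ideal_pow R I j \<subseteq> pideal R f"
    and surj: "\<forall>x. compat_S R S x \<longrightarrow> (\<exists>y. compat_I R I y \<and> induced R S I y x)"
    by (auto simp: identity_induces_iso_def)
  have I0: "I = {0}"
  proof -
    have "p = 0" if p: "p \<in> I" for p
    proof (rule ccontr)
      assume p0: "p \<noteq> 0"
      let ?z = "\<lambda>m::nat. cis (2 * pi / real m)"
      have "?z ` (S - {0,1}) \<subseteq> {x. poly p x = 0}"
      proof
        fix z assume "z \<in> ?z ` (S - {0,1})"
        then obtain m where m0: "m \<in> S - {0,1}" "z = ?z m" by blast
        hence m: "m \<in> S" "m \<ge> 2" "z = ?z m" by auto
        have "cyclotomic_poly m \<in> Phi_star S" unfolding Phi_star_def using m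
          by (intro CollectI exI[of _ "{#m#}"]) simp
        then obtain j where "ideal_pow R I j \<subseteq> pideal R (cyclotomic_poly m)" using cont by blast
        with pow_in_ideal_pow[OF R p, of j] obtain g where g: "p ^ j = cyclotomic_poly m * g"
          by (auto simp: pideal_def)
        have "poly (p ^ j) z = 0" unfolding g using cyclo_root[of m] m by simp
        thus "z \<in> {x. poly p x = 0}" by simp
      qed
      moreover have "infinite (?z ` (S - {0,1}))"
      proof
        assume "finite (?z ` (S - {0,1}))"
        moreover have "inj_on ?z (S - {0,1})"
          by (rule inj_on_subset[OF zeta_inj]) auto
        ultimately have "finite (S - {0,1})" using finite_imageD by blast
        thus False using Sinf by simp
      qed
      ultimately show False using poly_roots_finite[OF p0] finite_subset by blast
    qed
    moreover have "0 \<in> I" using I by (simp add: is_ideal_def)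
    ultimately show ?thesis by auto
  qed
  define T where "T = S - {0}"
  have Tinf: "infinite T" using Sinf by (simp add: T_def)
  define e where "e = enumerate T"
  have eT: "e i \<in> T" for i using enumerate_in_set[OF Tinf] by (simp add: e_def)
  have e1: "\<And>i. e i \<ge> 1" using eT by (auto simp: T_def Suc_le_eq)
  have rng: "range e \<subseteq> S" using eT T_def by auto
  have cover: "S - {0} \<subseteq> range e" using bij_enumerate[OF Tinf]
    by (auto simp: e_def T_def bij_betw_def)
  have exN: "\<exists>N. f dvd FF e N" if "f \<in> Phi_star S" for f
    using that Phi_star_dvd_FF[OF cover] by (auto simp: Phi_star_def)
  define Nf where "Nf f = (LEAST N. f dvd FF e N)" for f
  define x where "x f = SS e (Nf f)" for f
  have NfI: "f dvd FF e (Nf f)" if "f \<in> Phi_star S" for f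
    using LeastI_ex[OF exN[OF that]] by (simp add: Nf_def)
  have compat: "compat_S R S x"
    unfolding compat_S_def
  proof (intro conjI ballI impI)
    fix f assume "f \<in> Phi_star S" show "x f \<in> Rpoly R"
      unfolding x_def by (rule zpoly_Rpoly[OF R SS_zpoly])
  next
    fix f g assume f: "f \<in> Phi_star S" and g: "g \<in> Phi_star S" and fg: "f dvd g"
    have "f dvd FF e (Nf g)" using fg NfI[OF g] by (rule dvd_trans)
    hence le: "Nf f \<le> Nf g" unfolding Nf_def by (rule Least_le)
    have "FF e (Nf f) dvd (SS e (Nf g) - SS e (Nf f))" by (rule SS_diff_dvd[OF le])
    hence "f dvd x g - x f" using NfI[OF f] unfolding x_def by (blast intro: dvd_trans)
    then obtain h where h: "x g - x f = f * h" by (rule dvdE)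
    have "zpoly (f * h)" unfolding h[symmetric] x_def by (intro zpoly_diff SS_zpoly)
    hence "zpoly h" using zpoly_div Phi_star_props[OF f] by blast
    thus "x g - x f \<in> pideal R f" using h zpoly_Rpoly[OF R] by (auto simp: pideal_def)
  qed
  obtain y where y: "induced R S I y x" using surj compat by blast
  define P where "P = y 1"
  have NfFF: "Nf (FF e N) = N" for N
    unfolding Nf_def
  proof (rule Least_equality)
    show "FF e N dvd FF e N" by simp
    fix n assume "FF e N dvd FF e n"
    hence "degree (FF e N) \<le> degree (FF e n)" using dvd_imp_degree_le FF_nz by blast
    thus "N \<le> n" using FF_deg_mono[of e n N, OF e1] by (meson not_le leD)
  qed
  have dv: "FF e N dvd P - SS e N" for N
  proof -
    have "FF e N \<in> Phi_star S" by (rule FF_Phi_star[OF rng])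
    moreover have "ideal_pow R I 1 \<subseteq> pideal R (FF e N)"
    proof
      fix a assume "a \<in> ideal_pow R I 1"
      hence "a = FF e N * 0" using zero_ideal_pow1[OF R] I0 by auto
      thus "a \<in> pideal R (FF e N)" using Rpoly_0[OF R] by (auto simp: pideal_def)
    qed
    ultimately have "y 1 - x (FF e N) \<in> pideal R (FF e N)" using y unfolding induced_def by blast
    thus ?thesis by (auto simp: pideal_def x_def NfFF P_def)
  qed
  have eq: "P = SS e (Suc k)" if "degree P < Suc k" for k
  proof (rule ccontr)
    assume ne: "P \<noteq> SS e (Suc k)"
    have "degree (FF e (Suc k)) \<le> degree (P - SS e (Suc k))"
      using dvd_imp_degree_le[OF dv[of "Suc k"]] ne by (simp del: FF.simps)
    moreover have "degree (P - SS e (Suc k)) \<le> max (degree P) (degree (SS e (Suc k)))"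
      by (rule degree_diff_le_max)
    moreover have "degree P < degree (FF e (Suc k))"
      using FF_deg_ge[of e "Suc k", OF e1] that by linarith
    moreover have "degree (SS e (Suc k)) < degree (FF e (Suc k))" by (rule SS_deg_less[OF e1])
    ultimately show False by linarith
  qed
  have "SS e (Suc (degree P)) = SS e (Suc (Suc (degree P)))"
    using eq[of "degree P"] eq[of "Suc (degree P)"] by simp
  hence "FF e (Suc (degree P)) = 0" by (simp add: SS_def)
  thus False using FF_nz by blast
qed

end
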